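(* Let $\Omega\subseteq\mathbb{R}^n$ be open, let $F:\Omega\times\mathbb{R}^N\times\mathbb{R}^{N\times n}\times(\mathbb{R}^N\otimes\mathbb{R}^{n\times n}_s)\to\mathbb{R}^N$ be locally bounded, and let $u:\Omega\to\mathbb{R}^N$ be continuous. Consider the system $F(x,u,Du,D^2u)=0$ on $\Omega$. (a) If $u$ is a contact solution of this system and $F$ is continuous, then at every point $x\in\Omega$ at which $u$ is twice differentiable we have $F(x,u(x),Du(x),D^2u(x))=0$. (b) If $u$ is twice differentiable at every point of $\Omega$ with $F(x,u(x),Du(x),D^2u(x))=0$ for all $x\in\Omega$, and $F$ is degenerate elliptic, then $u$ is a contact solution of the system.
   Context: Notation: summation over repeated indices; Greek indices run over $1,\dots,N$, Latin over $1,\dots,n$. $\mathbb{R}^{n\times n}_s$ denotes symmetric $n\times n$ matrices; $\mathbb{R}^N\otimes\mathbb{R}^{n\times n}_s$ is the space of arrays $\mathbf{X}=(\mathbf{X}_{\alpha ij})$ with $\mathbf{X}_{\alpha ij}=\mathbf{X}_{\alpha ji}$, and $\mathbf{X}:z\otimes z\in\mathbb{R}^N$ has components $\mathbf{X}_{\alpha ij}z_iz_j$. For $a,b\in\mathbb{R}^N$, $a\vee b:=\frac12(a\otimes b+b\otimes a)$, a symmetric $N\times N$ matrix; inequalities between symmetric matrices are in the sense of quadratic forms. $\mathbb{S}^{N-1}$ is the unit sphere of $\mathbb{R}^N$; for $\xi\in\mathbb{R}^N$, $\xi^\top v$ is the Euclidean inner product. Second contact jet: for continuous $u:\Omega\to\mathbb{R}^N$,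 $x\in\Omega$, $\xi\in\mathbb{S}^{N-1}$, $J^{2,\xi}u(x)$ is the set of $(P,\mathbf{X})\in\mathbb{R}^{N\times n}\times(\mathbb{R}^N\otimes\mathbb{R}^{n\times n}_s)$ such that there is a continuous $T:\mathbb{R}^n\setminus\{0\}\to\mathbb{R}^{N\times N}_s$ with $|T(y)|\to0$ as $y\to0$ and $\xi\vee[u(z)-u(x)-P(z-x)-\frac12\mathbf{X}:(z-x)\otimes(z-x)]\le |z-x|^2T(z-x)$ for all $z\neq x$ close to $x$. Its closure $\bar J^{2,\xi}u(x)$ is the set of $(P,\mathbf{X})$ for which there exist $\xi_m\in\mathbb{S}^{N-1}$, $x_m\in\Omega$, $(P_m,\mathbf{X}_m)\in J^{2,\xi_m}u(x_m)$ with $(\xi_m,x_m,P_m,\mathbf{X}_m)\to(\xi,x,P,\mathbf{X})$. $\xi$-envelope: $\xi^*F(x,\eta,P,\mathbf{X}):=\limsup_{\varepsilon\to0}\sup\{\xi^\top F(y,\theta,Q,\mathbf{Y}):|x-y|+|\eta-\theta|+|P-Q|+|\mathbf{X}-\mathbf{Y}|\le\varepsilon\}$. Contact solution: the continuous $u$ is a contact solution of $F(\cdot,u,Du,D^2u)=0$ on $\Omega$ if for all $x\in\Omega$, $\xi\in\mathbb{S}^{N-1}$ and $(P,\mathbf{X})\in\bar J^{2,\xi}u(x)$ we have $\xi^*F(x,u(x),P,\mathbf{X})\ge0$. Degenerate ellipticity: $F$ is degenerate elliptic if for all $(x,\eta,P)$ and all $\mathbf{X},\mathbf{Y}\in\mathbb{R}^N\otimes\mathbb{R}^{n\times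 n}_s$ the symmetric $n\times n$ matrix with entries $\big(F_\alpha(x,\eta,P,\mathbf{X})-F_\alpha(x,\eta,P,\mathbf{Y})\big)(\mathbf{X}-\mathbf{Y})_{\alpha ij}$ is positive semidefinite. *)

theory Defs
  imports "HOL-Analysis.Analysis"
begin

text \<open>Dimensions: n = CARD('n), N = CARD('N).
  Gradients P in R^{N x n}: real^'n^'N (row alpha, column i).
  Second-order arrays X in R^N (x) R^{n x n}_s: real^'n^'n^'N, entry X$alpha$i$j.\<close>

definition sym_arr :: "real^'n^'n^'N \<Rightarrow> bool" where
  "sym_arr X \<longleftrightarrow> (\<forall>a i j. X$a$i$j = X$a$j$i)"

definition contr :: "real^'n^'n^'N \<Rightarrow> real^'n \<Rightarrow> real^'N" where
  "contr X z = (\<chi> a. \<Sum>i\<in>UNIV. \<Sum>j\<in>UNIV. X$a$i$j * z$i * z$j)"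

definition vee :: "real^'N \<Rightarrow> real^'N \<Rightarrow> real^'N^'N" where
  "vee a b = (\<chi> i k. (a$i * b$k + b$i * a$k) / 2)"

definition symmetric_mat :: "real^'k^'k \<Rightarrow> bool" where
  "symmetric_mat A \<longleftrightarrow> transpose A = A"

definition mat_le :: "real^'k^'k \<Rightarrow> real^'k^'k \<Rightarrow> bool" where
  "mat_le A B \<longleftrightarrow> (\<forall>v. v \<bullet> (A *v v) \<le> v \<bullet> (B *v v))"

definition psd :: "real^'k^'k \<Rightarrow> bool" where
  "psd A \<longleftrightarrow> (\<forall>v. 0 \<le> v \<bullet> (A *v v))"

definition jet2 :: "(real^'n \<Rightarrow> real^'N) \<Rightarrow> (real^'n) set \<Rightarrow> real^'N \<Rightarrow> real^'n
    \<Rightarrow> real^'n^'N \<Rightarrow> real^'n^'n^'N \<Rightarrow> bool" where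
  "jet2 u \<Omega> \<xi> x P X \<longleftrightarrow> sym_arr X \<and>
     (\<exists>T :: real^'n \<Rightarrow> real^'N^'N.
        continuous_on (UNIV - {0}) T \<and> (\<forall>y. y \<noteq> 0 \<longrightarrow> symmetric_mat (T y)) \<and>
        ((\<lambda>y. norm (T y)) \<longlongrightarrow> 0) (at 0) \<and>
        (\<exists>r>0. \<forall>z\<in>\<Omega>. z \<noteq> x \<and> dist z x < r \<longrightarrow>
           mat_le (vee \<xi> (u z - u x - P *v (z - x) - (1/2) *\<^sub>R contr X (z - x)))
                  ((norm (z - x))\<^sup>2 *\<^sub>R T (z - x))))"

definition cjet2 :: "(real^'n \<Rightarrow> real^'N) \<Rightarrow> (real^'n) set \<Rightarrow> real^'N \<Rightarrow> real^'n
    \<Rightarrow> real^'n^'N \<Rightarrow> real^'n^'n^'N \<Rightarrow> bool" where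
  "cjet2 u \<Omega> \<xi> x P X \<longleftrightarrow>
     (\<exists>\<xi>s xs Ps Xs. (\<forall>m. norm (\<xi>s m) = 1 \<and> xs m \<in> \<Omega> \<and>
                         jet2 u \<Omega> (\<xi>s m) (xs m) (Ps m) (Xs m)) \<and>
        \<xi>s \<longlonglongrightarrow> \<xi> \<and> xs \<longlonglongrightarrow> x \<and> Ps \<longlonglongrightarrow> P \<and> Xs \<longlonglongrightarrow> X)"

definition xi_env :: "(real^'n \<Rightarrow> real^'N \<Rightarrow> real^'n^'N \<Rightarrow> real^'n^'n^'N \<Rightarrow> real^'N)
    \<Rightarrow> (real^'n) set \<Rightarrow> real^'N \<Rightarrow> real^'n \<Rightarrow> real^'N \<Rightarrow> real^'n^'N \<Rightarrow> real^'n^'n^'N \<Rightarrow> ereal" where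
  "xi_env F \<Omega> \<xi> x \<eta> P X =
     Limsup (at_right (0::real)) (\<lambda>\<epsilon>.
       SUP q \<in> {(y, \<theta>, Q, Y). y \<in> \<Omega> \<and> sym_arr Y \<and>
                 norm (x - y) + norm (\<eta> - \<theta>) + norm (P - Q) + norm (X - Y) \<le> \<epsilon>}.
         ereal (\<xi> \<bullet> (case q of (y, \<theta>, Q, Y) \<Rightarrow> F y \<theta> Q Y)))"

definition contact_solution :: "(real^'n \<Rightarrow> real^'N \<Rightarrow> real^'n^'N \<Rightarrow> real^'n^'n^'N \<Rightarrow> real^'N)
    \<Rightarrow> (real^'n) set \<Rightarrow> (real^'n \<Rightarrow> real^'N) \<Rightarrow> bool" where
  "contact_solution F \<Omega> u \<longleftrightarrow> continuous_on \<Omega> u \<and>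
     (\<forall>x\<in>\<Omega>. \<forall>\<xi>. norm \<xi> = 1 \<longrightarrow> (\<forall>P X. cjet2 u \<Omega> \<xi> x P X \<longrightarrow> xi_env F \<Omega> \<xi> x (u x) P X \<ge> 0))"

definition dom_F :: "(real^'n) set \<Rightarrow> ((real^'n) \<times> (real^'N) \<times> (real^'n^'N) \<times> (real^'n^'n^'N)) set" where
  "dom_F \<Omega> = \<Omega> \<times> UNIV \<times> UNIV \<times> {X. sym_arr X}"

definition locally_bounded :: "(real^'n \<Rightarrow> real^'N \<Rightarrow> real^'n^'N \<Rightarrow> real^'n^'n^'N \<Rightarrow> real^'N)
    \<Rightarrow> (real^'n) set \<Rightarrow> bool" where
  "locally_bounded F \<Omega> \<longleftrightarrow> (\<forall>p\<in>dom_F \<Omega>. \<exists>r>0. \<exists>M. \<forall>q\<in>dom_F \<Omega>. dist q p < r \<longrightarrow>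
      norm (case q of (y, \<theta>, Q, Y) \<Rightarrow> F y \<theta> Q Y) \<le> M)"

definition F_continuous :: "(real^'n \<Rightarrow> real^'N \<Rightarrow> real^'n^'N \<Rightarrow> real^'n^'n^'N \<Rightarrow> real^'N)
    \<Rightarrow> (real^'n) set \<Rightarrow> bool" where
  "F_continuous F \<Omega> \<longleftrightarrow> continuous_on (dom_F \<Omega>) (\<lambda>(y, \<theta>, Q, Y). F y \<theta> Q Y)"

definition degenerate_elliptic :: "(real^'n \<Rightarrow> real^'N \<Rightarrow> real^'n^'N \<Rightarrow> real^'n^'n^'N \<Rightarrow> real^'N)
    \<Rightarrow> (real^'n) set \<Rightarrow> bool" where
  "degenerate_elliptic F \<Omega> \<longleftrightarrow> (\<forall>x\<in>\<Omega>. \<forall>\<eta> P X Y. sym_arr X \<longrightarrow> sym_arr Y \<longrightarrow>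
      psd (\<chi> i j. \<Sum>a\<in>UNIV. (F x \<eta> P X $ a - F x \<eta> P Y $ a) * (X - Y)$a$i$j))"

definition twice_diff_at :: "(real^'n \<Rightarrow> real^'N) \<Rightarrow> real^'n \<Rightarrow> real^'n^'N \<Rightarrow> real^'n^'n^'N \<Rightarrow> bool" where
  "twice_diff_at u x P X \<longleftrightarrow>
     (\<exists>S Du. open S \<and> x \<in> S \<and> (\<forall>y\<in>S. (u has_derivative (\<lambda>h. Du y *v h)) (at y)) \<and>
        Du x = P \<and>
        (Du has_derivative (\<lambda>h. \<chi> a i. \<Sum>j\<in>UNIV. X$a$i$j * h$j)) (at x))"

end

theory Submission
  imports Defs "HOL-Analysis.Analysis"
begin


lemma norm_mv_le:
  fixes A :: "real^'n^'m"
  shows "norm (A *v x) \<le> real CARD('m) * norm A * norm x"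
proof -
  have "norm (A *v x) \<le> (\<Sum>i\<in>UNIV. \<bar>(A *v x)$i\<bar>)" by (rule norm_le_l1_cart)
  also have "\<dots> \<le> (\<Sum>i\<in>(UNIV::'m set). norm A * norm x)"
  proof (rule sum_mono)
    fix i
    have "\<bar>(A *v x)$i\<bar> = \<bar>A$i \<bullet> x\<bar>" by (simp add: matrix_vector_mul_component)
    also have "\<dots> \<le> norm (A$i) * norm x" by (rule Cauchy_Schwarz_ineq2)
    also have "\<dots> \<le> norm A * norm x" by (rule mult_right_mono[OF Finite_Cartesian_Product.norm_nth_le norm_ge_zero])
    finally show "\<bar>(A *v x)$i\<bar> \<le> norm A * norm x" .
  qed
  also have "\<dots> = real CARD('m) * norm A * norm x" by simp
  finally show ?thesis .
qed

lemma quad_le: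
  fixes T :: "real^'m^'m"
  shows "v \<bullet> (T *v v) \<le> real CARD('m) * norm T * (norm v)^2"
proof -
  have "v \<bullet> (T *v v) \<le> norm v * norm (T *v v)" by (rule norm_cauchy_schwarz)
  also have "\<dots> \<le> norm v * (real CARD('m) * norm T * norm v)"
    by (simp add: mult_left_mono norm_mv_le)
  finally show ?thesis by (simp add: power2_eq_square mult_ac)
qed

lemma vee_mv: "vee a b *v v = (1/2) *\<^sub>R ((b \<bullet> v) *\<^sub>R a + (a \<bullet> v) *\<^sub>R b)"
  unfolding vec_eq_iff
proof
  fix i
  have "(vee a b *v v) $ i = (\<Sum>k\<in>UNIV. (a$i * b$k + b$i * a$k) / 2 * v$k)"
    by (simp add: vee_def matrix_vector_mult_def)
  also have "\<dots> = (\<Sum>k\<in>UNIV. (a$i/2) * (b$k * v$k) + (b$i/2) * (a$k * v$k))"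
    by (rule sum.cong) (auto simp: field_simps)
  also have "\<dots> = (a$i/2) * (b \<bullet> v) + (b$i/2) * (a \<bullet> v)"
    by (simp add: sum.distrib sum_distrib_left inner_vec_def)
  finally show "(vee a b *v v) $ i = ((1/2) *\<^sub>R ((b \<bullet> v) *\<^sub>R a + (a \<bullet> v) *\<^sub>R b)) $ i"
    by (simp add: field_simps)
qed

lemma vee_quad: "v \<bullet> (vee a b *v v) = (a \<bullet> v) * (b \<bullet> v)"
  unfolding vee_mv by (simp add: inner_add_right inner_commute field_simps)

lemma scaled_id_quad: fixes v :: "real^'m" shows "v \<bullet> ((c *\<^sub>R mat 1) *v v) = c * (v \<bullet> v)"
proof -
  have "(c *\<^sub>R mat 1) *v v = c *\<^sub>R v"
    using scaleR_matrix_vector_assoc[of c "mat 1" v] by simp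
  then show ?thesis by simp
qed

lemma mvt01:
  fixes \<phi> :: "real \<Rightarrow> 'a::real_inner"
  assumes d: "\<And>t. t \<in> {0..1} \<Longrightarrow> (\<phi> has_derivative (\<lambda>s. s *\<^sub>R \<phi>' t)) (at t)"
    and b: "\<And>t. t \<in> {0..1} \<Longrightarrow> norm (\<phi>' t) \<le> B"
  shows "norm (\<phi> 1 - \<phi> 0) \<le> B"
proof -
  have "continuous_on {0..1} \<phi>"
    by (meson continuous_at_imp_continuous_on d has_derivative_continuous)
  then obtain t where t: "t \<in> {0<..<1}" "norm (\<phi> 1 - \<phi> 0) \<le> norm ((\<lambda>s. s *\<^sub>R \<phi>' t) (1 - 0))"
    using mvt_general[of 0 1 \<phi> "\<lambda>t s. s *\<^sub>R \<phi>' t"] d by force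
  then show ?thesis using b[of t] by auto
qed

definition lin2 :: "real^'n^'n^'N \<Rightarrow> real^'n \<Rightarrow> real^'n^'N" where
  "lin2 X = (\<lambda>h. \<chi> a i. \<Sum>j\<in>UNIV. X$a$i$j * h$j)"

lemma lin2_mv: "lin2 X (t *\<^sub>R h) *v h = t *\<^sub>R contr X h"
  by (simp add: lin2_def contr_def vec_eq_iff matrix_vector_mult_def sum_distrib_left sum_distrib_right mult_ac)

lemma lin2_add: "lin2 X (a + b) = lin2 X a + lin2 X b"
  by (simp add: lin2_def vec_eq_iff sum.distrib algebra_simps)

lemma lin2_diff: "lin2 X (a - b) = lin2 X a - lin2 X b"
  by (simp add: lin2_def vec_eq_iff sum_subtractf algebra_simps)

lemma twice_diff_obtain:
  assumes "twice_diff_at u x P X"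
  obtains S Du where "open S" "x \<in> S" "\<And>y. y\<in>S \<Longrightarrow> (u has_derivative (\<lambda>h. Du y *v h)) (at y)"
    "Du x = P" "(Du has_derivative lin2 X) (at x)"
  using assms unfolding twice_diff_at_def lin2_def by blast

lemma taylor2:
  fixes u :: "real^'n \<Rightarrow> real^'N"
  assumes "twice_diff_at u x P X" "e > 0"
  shows "\<exists>d>0. \<forall>h. norm h < d \<longrightarrow> norm (u (x+h) - u x - P *v h - (1/2) *\<^sub>R contr X h) \<le> e * (norm h)^2"
proof -
  obtain S Du where S: "open S" "x \<in> S" and du: "\<And>y. y\<in>S \<Longrightarrow> (u has_derivative (\<lambda>h. Du y *v h)) (at y)"
    and P: "Du x = P" and d2: "(Du has_derivative lin2 X) (at x)"
    using twice_diff_obtain[OF assms(1)] by metis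
  define C where "C = real CARD('N)"
  have C: "C > 0" by (simp add: C_def)
  define e' where "e' = e / C"
  have e': "e' > 0" using C assms(2) by (simp add: e'_def)
  obtain d1 where d1: "d1>0" "\<And>y. norm(y-x) < d1 \<Longrightarrow> norm(Du y - Du x - lin2 X (y-x)) \<le> e' * norm(y-x)"
    using d2 e' unfolding has_derivative_at_alt by blast
  obtain d2 where d2: "d2>0" "ball x d2 \<subseteq> S" using S open_contains_ball by blast
  show ?thesis
  proof (intro exI[of _ "min d1 d2"] conjI allI impI)
    show "min d1 d2 > 0" using d1 d2 by simp
    fix h :: "real^'n" assume hd: "norm h < min d1 d2"
    define \<phi> where "\<phi> t = u (x + t *\<^sub>R h) - t *\<^sub>R (P *v h) - (t^2/2) *\<^sub>R contr X h" for t
    define \<phi>' where "\<phi>' t = Du (x + t *\<^sub>R h) *v h - P *v h - t *\<^sub>R contr X h" for t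
    have small: "norm (t *\<^sub>R h) < min d1 d2" if "t \<in> {0..1}" for t
    proof -
      have "norm (t *\<^sub>R h) = \<bar>t\<bar> * norm h" by simp
      also have "\<dots> \<le> norm h" using that by (simp add: mult_left_le_one_le)
      finally show ?thesis using hd by linarith
    qed
    have inS: "x + t *\<^sub>R h \<in> S" if "t \<in> {0..1}" for t
      using small[OF that] d2(2) by (auto simp: dist_norm)
    have der: "(\<phi> has_derivative (\<lambda>s. s *\<^sub>R \<phi>' t)) (at t)" if t: "t \<in> {0..1}" for t
    proof -
      have g: "((\<lambda>t. x + t *\<^sub>R h) has_derivative (\<lambda>s. s *\<^sub>R h)) (at t)"
        by (auto intro!: derivative_eq_intros)
      have h1: "((\<lambda>t. u (x + t *\<^sub>R h)) has_derivative (\<lambda>s. Du (x+t*\<^sub>R h) *v (s *\<^sub>R h))) (at t)"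
        by (rule has_derivative_compose[OF g du[OF inS[OF t]]])
      have h2: "((\<lambda>t. t *\<^sub>R (P *v h)) has_derivative (\<lambda>s. s *\<^sub>R (P *v h))) (at t)"
        by (auto intro!: derivative_eq_intros)
      have h3: "((\<lambda>t. (t^2/2) *\<^sub>R contr X h) has_derivative (\<lambda>s. (s * t) *\<^sub>R contr X h)) (at t)"
        by (auto intro!: derivative_eq_intros simp: power2_eq_square)
      show ?thesis unfolding \<phi>_def
        apply (rule has_derivative_eq_rhs[OF has_derivative_diff[OF has_derivative_diff[OF h1 h2] h3]])
        by (auto simp: \<phi>'_def matrix_vector_mult_scaleR algebra_simps)
    qed
    have bd: "norm (\<phi>' t) \<le> e * (norm h)^2" if t: "t \<in> {0..1}" for t
    proof -
      have "\<phi>' t = (Du (x + t *\<^sub>R h) - Du x - lin2 X ((x + t *\<^sub>R h) - x)) *v h"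
        by (simp add: \<phi>'_def P lin2_mv matrix_vector_mult_diff_rdistrib)
      also have "norm \<dots> \<le> C * norm (Du (x + t *\<^sub>R h) - Du x - lin2 X ((x + t *\<^sub>R h) - x)) * norm h"
        unfolding C_def by (rule norm_mv_le)
      also have "\<dots> \<le> C * (e' * norm (t *\<^sub>R h)) * norm h"
        using d1(2)[of "x + t *\<^sub>R h"] small[OF t] C
        by (intro mult_right_mono mult_left_mono) auto
      also have "\<dots> \<le> C * (e' * norm h) * norm h"
        using t C e' by (intro mult_right_mono mult_left_mono) (auto simp: mult_left_le_one_le)
      also have "\<dots> = e * (norm h)^2" using C by (simp add: e'_def power2_eq_square)
      finally show ?thesis .
    qed
    have "norm (\<phi> 1 - \<phi> 0) \<le> e * (norm h)^2" by (rule mvt01[OF der bd])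
    moreover have "\<phi> 1 - \<phi> 0 = u (x+h) - u x - P *v h - (1/2) *\<^sub>R contr X h"
      by (simp add: \<phi>_def)
    ultimately show "norm (u (x+h) - u x - P *v h - (1/2) *\<^sub>R contr X h) \<le> e * (norm h)^2" by simp
  qed
qed

lemma lin2_scale: "lin2 X (s *\<^sub>R k) = s *\<^sub>R lin2 X k"
  by (simp add: lin2_def vec_eq_iff sum_distrib_left algebra_simps)

lemma lin2_axis: "lin2 X (axis q 1) *v axis p 1 = (\<chi> a. X$a$p$q)"
  by (simp add: lin2_def matrix_vector_mult_def axis_def vec_eq_iff if_distrib cong: if_cong)

lemma sym2:
  fixes u :: "real^'n \<Rightarrow> real^'N"
  assumes "twice_diff_at u x P X"
  shows "sym_arr X"
proof -
  obtain S Du where S: "open S" "x \<in> S" and du: "\<And>y. y\<in>S \<Longrightarrow> (u has_derivative (\<lambda>h. Du y *v h)) (at y)"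
    and P: "Du x = P" and dd: "(Du has_derivative lin2 X) (at x)"
    using twice_diff_obtain[OF assms(1)] by metis
  define C where "C = real CARD('N)"
  have C: "C > 0" by (simp add: C_def)
  have main: "norm ((\<chi> a. X$a$p$q) - (\<chi> a. X$a$q$p)) \<le> e" if e: "e > 0" for e p q
  proof -
    define e' where "e' = e / (6 * C)"
    have e': "e' > 0" using C e by (simp add: e'_def)
    obtain d1 where d1: "d1>0" "\<And>y. norm(y-x) < d1 \<Longrightarrow> norm(Du y - Du x - lin2 X (y-x)) \<le> e' * norm(y-x)"
      using dd e' unfolding has_derivative_at_alt by blast
    obtain d2 where d2: "d2>0" "ball x d2 \<subseteq> S" using S open_contains_ball by blast
    define s where "s = min d1 d2 / 4"
    have s: "s > 0" "2 * s < d1" "2 * s < d2" using d1 d2 by (auto simp: s_def)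
    have G: "norm (u (x+h+k) - u (x+h) - u (x+k) + u x - lin2 X k *v h) \<le> 3 * C * e' * s^2"
      if hk: "norm h = s" "norm k = s" for h k
    proof -
      define \<phi> where "\<phi> t = u (x + t *\<^sub>R h + k) - u (x + t *\<^sub>R h) - t *\<^sub>R (lin2 X k *v h)" for t
      define \<phi>' where "\<phi>' t = Du (x + t *\<^sub>R h + k) *v h - Du (x + t *\<^sub>R h) *v h - lin2 X k *v h" for t
      have n1: "norm (t *\<^sub>R h) \<le> s" if "t \<in> {0..1}" for t
        using that hk s by (simp add: mult_left_le_one_le)
      have n2: "norm (t *\<^sub>R h + k) \<le> 2 * s" if "t \<in> {0..1}" for t
        using n1[OF that] hk norm_triangle_ineq[of "t *\<^sub>R h" k] by linarith
      have inS1: "x + t *\<^sub>R h \<in> S" if "t \<in> {0..1}" for t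
        using n1[OF that] s d2(2) by (auto simp: dist_norm)
      have inS2: "x + t *\<^sub>R h + k \<in> S" if "t \<in> {0..1}" for t
      proof -
        have "dist (x + (t *\<^sub>R h + k)) x < d2" using n2[OF that] s by (simp add: dist_norm)
        then have "x + (t *\<^sub>R h + k) \<in> ball x d2" by (simp add: dist_commute)
        then have "x + (t *\<^sub>R h + k) \<in> S" using d2(2) by auto
        then show ?thesis by (simp add: add.assoc)
      qed
      have der: "(\<phi> has_derivative (\<lambda>s. s *\<^sub>R \<phi>' t)) (at t)" if t: "t \<in> {0..1}" for t
      proof -
        have g1: "((\<lambda>t. x + t *\<^sub>R h) has_derivative (\<lambda>s. s *\<^sub>R h)) (at t)"
          by (auto intro!: derivative_eq_intros)
        have g2: "((\<lambda>t. x + t *\<^sub>R h + k) has_derivative (\<lambda>s. s *\<^sub>R h)) (at t)"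
          by (auto intro!: derivative_eq_intros)
        have h1: "((\<lambda>t. u (x + t *\<^sub>R h + k)) has_derivative (\<lambda>s. Du (x+t*\<^sub>R h + k) *v (s *\<^sub>R h))) (at t)"
          by (rule has_derivative_compose[OF g2 du[OF inS2[OF t]]])
        have h2: "((\<lambda>t. u (x + t *\<^sub>R h)) has_derivative (\<lambda>s. Du (x+t*\<^sub>R h) *v (s *\<^sub>R h))) (at t)"
          by (rule has_derivative_compose[OF g1 du[OF inS1[OF t]]])
        have h3: "((\<lambda>t. t *\<^sub>R (lin2 X k *v h)) has_derivative (\<lambda>s. s *\<^sub>R (lin2 X k *v h))) (at t)"
          by (auto intro!: derivative_eq_intros)
        show ?thesis unfolding \<phi>_def
          apply (rule has_derivative_eq_rhs[OF has_derivative_diff[OF has_derivative_diff[OF h1 h2] h3]])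
          by (auto simp: \<phi>'_def matrix_vector_mult_scaleR algebra_simps)
      qed
      have bd: "norm (\<phi>' t) \<le> 3 * C * e' * s^2" if t: "t \<in> {0..1}" for t
      proof -
        define A where "A = Du (x + t *\<^sub>R h + k) - Du x - lin2 X ((x + t *\<^sub>R h + k) - x)"
        define B where "B = Du (x + t *\<^sub>R h) - Du x - lin2 X ((x + t *\<^sub>R h) - x)"
        have l1: "lin2 X ((x + t *\<^sub>R h + k) - x) = lin2 X (t *\<^sub>R h) + lin2 X k"
          by (simp add: lin2_add[symmetric] add.assoc)
        have l2: "lin2 X ((x + t *\<^sub>R h) - x) = lin2 X (t *\<^sub>R h)" by simp
        have "\<phi>' t = A *v h - B *v h"
          unfolding \<phi>'_def A_def B_def l1 l2
          by (simp add: matrix_vector_mult_diff_rdistrib matrix_vector_mult_add_rdistrib)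
        then have "norm (\<phi>' t) \<le> norm (A *v h) + norm (B *v h)" by (simp add: norm_triangle_ineq4)
        also have "\<dots> \<le> C * norm A * norm h + C * norm B * norm h"
          unfolding C_def by (intro add_mono norm_mv_le)
        also have "\<dots> = C * norm A * s + C * norm B * s" using hk by simp
        also have "\<dots> \<le> C * (e' * (2 * s)) * s + C * (e' * s) * s"
        proof -
          have "norm A \<le> e' * norm (t *\<^sub>R h + k)"
            using d1(2)[of "x + t *\<^sub>R h + k"] n2[OF t] s unfolding A_def by (simp add: add.assoc)
          also have "\<dots> \<le> e' * (2 * s)" using n2[OF t] e' by (simp add: mult_left_mono)
          finally have nA: "norm A \<le> e' * (2 * s)" .
          have "norm B \<le> e' * norm (t *\<^sub>R h)"
            using d1(2)[of "x + t *\<^sub>R h"] n1[OF t] s unfolding B_def by simp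
          also have "\<dots> \<le> e' * s" using n1[OF t] e' by (simp add: mult_left_mono)
          finally have nB: "norm B \<le> e' * s" .
          have "C * norm A * s \<le> C * (e' * (2 * s)) * s"
            using nA C s by (simp add: mult_left_mono mult_right_mono)
          moreover have "C * norm B * s \<le> C * (e' * s) * s"
            using nB C s by (simp add: mult_left_mono mult_right_mono)
          ultimately show ?thesis by linarith
        qed
        also have "\<dots> = 3 * C * e' * s^2" by (simp add: power2_eq_square algebra_simps)
        finally show ?thesis .
      qed
      have "norm (\<phi> 1 - \<phi> 0) \<le> 3 * C * e' * s^2" by (rule mvt01[OF der bd])
      moreover have "\<phi> 1 - \<phi> 0 = u (x+h+k) - u (x+h) - u (x+k) + u x - lin2 X k *v h"
        by (simp add: \<phi>_def)
      ultimately show ?thesis by simp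
    qed
    define h where "h = s *\<^sub>R axis p (1::real)"
    define k where "k = s *\<^sub>R axis q (1::real)"
    have nh: "norm h = s" "norm k = s" using s by (auto simp: h_def k_def)
    have G1: "norm (u (x+h+k) - u (x+h) - u (x+k) + u x - lin2 X k *v h) \<le> 3 * C * e' * s^2"
      using G nh by blast
    have G2: "norm (u (x+h+k) - u (x+k) - u (x+h) + u x - lin2 X h *v k) \<le> 3 * C * e' * s^2"
      using G[of k h] nh by (simp add: add_ac)
    have "norm (lin2 X k *v h - lin2 X h *v k) \<le> 6 * C * e' * s^2"
      using norm_triangle_ineq4[of "u (x+h+k) - u (x+h) - u (x+k) + u x - lin2 X h *v k"
          "u (x+h+k) - u (x+h) - u (x+k) + u x - lin2 X k *v h"] G1 G2
      by (simp add: algebra_simps)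
    moreover have "lin2 X k *v h = s^2 *\<^sub>R (\<chi> a. X$a$p$q)"
      by (simp add: h_def k_def lin2_scale matrix_vector_mult_scaleR lin2_axis
          scaleR_matrix_vector_assoc[symmetric] power2_eq_square)
    moreover have "lin2 X h *v k = s^2 *\<^sub>R (\<chi> a. X$a$q$p)"
      by (simp add: h_def k_def lin2_scale matrix_vector_mult_scaleR lin2_axis
          scaleR_matrix_vector_assoc[symmetric] power2_eq_square)
    ultimately have "s^2 * norm ((\<chi> a. X$a$p$q) - (\<chi> a. X$a$q$p)) \<le> s^2 * e"
      using C by (simp add: e'_def scaleR_diff_right[symmetric] mult.commute)
    then show ?thesis using s by simp
  qed
  show ?thesis unfolding sym_arr_def
  proof (intro allI)
    fix a i j
    have "\<bar>X$a$i$j - X$a$j$i\<bar> \<le> e" if "e > 0" for e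
      using component_le_norm_cart[of "(\<chi> a. X$a$i$j) - (\<chi> a. X$a$j$i)" a] main[OF that, of i j] by simp
    then show "X$a$i$j = X$a$j$i"
      by (metis abs_le_zero_iff dense_ge eq_iff_diff_eq_0)
  qed
qed



lemma jet_twice:
  fixes u :: "real^'n \<Rightarrow> real^'N"
  assumes \<Omega>: "open \<Omega>" and uc: "continuous_on \<Omega> u" and x: "x \<in> \<Omega>"
    and td: "twice_diff_at u x P X" and \<xi>: "norm \<xi> = 1"
  shows "jet2 u \<Omega> \<xi> x P X"
proof -
  have sym: "sym_arr X" by (rule sym2[OF td])
  obtain d0 where d0: "d0 > 0" "ball x d0 \<subseteq> \<Omega>" using \<Omega> x open_contains_ball by blast
  define d where "d = d0 / 2"
  have d: "d > 0" "d < d0" using d0 by (auto simp: d_def)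
  define r where "r z = u z - u x - P *v (z - x) - (1/2) *\<^sub>R contr X (z - x)" for z
  define c where "c y = (d / max d (norm y)) *\<^sub>R y" for y :: "real^'n"
  define g where "g y = norm (r (x + c y)) / (norm (c y))^2" for y
  define T where "T y = g y *\<^sub>R (mat 1 :: real^'N^'N)" for y
  have nc: "norm (c y) = d * norm y / max d (norm y)" for y
    using d by (simp add: c_def)
  have nc_le: "norm (c y) \<le> d" for y
  proof -
    have "d * norm y \<le> d * max d (norm y)" using d by (simp add: mult_left_mono)
    then show ?thesis unfolding nc using d by (simp add: divide_le_eq)
  qed
  have c0: "c y \<noteq> 0" if "y \<noteq> 0" for y
    using that d by (simp add: c_def)
  have cid: "c y = y" if "norm y \<le> d" for y
    using that d by (simp add: c_def max_def)
  have cin: "x + c y \<in> \<Omega>" for y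
  proof -
    have "dist x (x + c y) < d0" using nc_le[of y] d by (simp add: dist_norm)
    then show ?thesis using d0(2) by auto
  qed
  have rc: "continuous_on \<Omega> r"
  proof -
    have c1: "continuous_on \<Omega> (\<lambda>z. P *v (z - x))"
      by (rule continuous_on_compose2[OF linear_continuous_on[OF matrix_vector_mul_bounded_linear]])
        (auto intro: continuous_intros)
    have c2: "continuous_on \<Omega> (\<lambda>z. contr X (z - x))"
      unfolding contr_def by (intro continuous_on_vec_lambda continuous_intros)
    show ?thesis unfolding r_def by (intro continuous_intros uc c1 c2)
  qed
  have cc: "continuous_on (UNIV - {0}) c"
    unfolding c_def using d by (intro continuous_intros) auto
  have gc: "continuous_on (UNIV - {0}) g"
    unfolding g_def
  proof (intro continuous_intros)
    show "continuous_on (UNIV - {0}) (\<lambda>y. r (x + c y))"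
      by (rule continuous_on_compose2[OF rc]) (auto intro!: continuous_intros cc cin)
    show "continuous_on (UNIV - {0}) (\<lambda>y. c y)" by (rule cc)
  qed (use c0 in auto)
  have Tc: "continuous_on (UNIV - {0}) T"
    unfolding T_def by (intro continuous_intros gc)
  have Tsym: "symmetric_mat (T y)" for y
    by (simp add: T_def symmetric_mat_def transpose_scalar)
  have g0: "(g \<longlongrightarrow> 0) (at 0)"
  proof (rule tendstoI)
    fix e :: real assume e: "e > 0"
    obtain d1 where d1: "d1 > 0" "\<And>h. norm h < d1 \<Longrightarrow> norm (u (x+h) - u x - P *v h - (1/2) *\<^sub>R contr X h) \<le> (e/2) * (norm h)^2"
      using taylor2[OF td, of "e/2"] e by auto
    show "eventually (\<lambda>y. dist (g y) 0 < e) (at 0)"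
      unfolding eventually_at
    proof (intro exI[of _ "min d1 d"] conjI allI impI ballI)
      show "min d1 d > 0" using d1 d by simp
      fix y :: "real^'n" assume y: "y \<noteq> 0 \<and> dist y 0 < min d1 d"
      then have ny: "norm y < d1" "norm y \<le> d" "norm y > 0" by auto
      have "g y = norm (r (x + y)) / (norm y)^2" using cid[OF ny(2)] by (simp add: g_def)
      also have "\<dots> \<le> (e/2) * (norm y)^2 / (norm y)^2"
        using d1(2)[OF ny(1)] by (intro divide_right_mono) (auto simp: r_def)
      also have "\<dots> = e/2" using ny by simp
      finally have "g y \<le> e/2" .
      moreover have "g y \<ge> 0" by (simp add: g_def)
      ultimately show "dist (g y) 0 < e" using e by simp
    qed
  qed
  have T0: "((\<lambda>y. norm (T y)) \<longlongrightarrow> 0) (at 0)"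
  proof -
    have "((\<lambda>y. \<bar>g y\<bar> * norm (mat 1 :: real^'N^'N)) \<longlongrightarrow> 0 * norm (mat 1 :: real^'N^'N)) (at 0)"
      by (intro tendsto_intros) (use g0 tendsto_rabs_zero in auto)
    then show ?thesis by (simp add: T_def)
  qed
  have ineq: "mat_le (vee \<xi> (u z - u x - P *v (z - x) - (1/2) *\<^sub>R contr X (z - x)))
                  ((norm (z - x))\<^sup>2 *\<^sub>R T (z - x))"
    if z: "z \<in> \<Omega>" "z \<noteq> x" "dist z x < d" for z
  proof -
    have nz: "norm (z - x) \<le> d" "norm (z - x) > 0" using z by (auto simp: dist_norm)
    have gz: "(norm (z - x))\<^sup>2 * g (z - x) = norm (r z)"
      using cid[OF nz(1)] nz by (simp add: g_def)
    show ?thesis unfolding mat_le_def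
    proof
      fix v :: "real^'N"
      have "v \<bullet> (vee \<xi> (r z) *v v) = (\<xi> \<bullet> v) * (r z \<bullet> v)" by (rule vee_quad)
      also have "\<dots> \<le> \<bar>\<xi> \<bullet> v\<bar> * \<bar>r z \<bullet> v\<bar>" by (simp add: abs_mult[symmetric])
      also have "\<dots> \<le> (norm \<xi> * norm v) * (norm (r z) * norm v)"
        by (intro mult_mono Cauchy_Schwarz_ineq2) auto
      also have "\<dots> = norm (r z) * (v \<bullet> v)" using \<xi> by (simp add: power2_norm_eq_inner[symmetric] power2_eq_square)
      also have "\<dots> = v \<bullet> (((norm (z - x))\<^sup>2 *\<^sub>R T (z - x)) *v v)"
        by (simp add: T_def scaled_id_quad gz[symmetric])
      finally show "v \<bullet> (vee \<xi> (u z - u x - P *v (z - x) - (1/2) *\<^sub>R contr X (z - x)) *v v)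
          \<le> v \<bullet> (((norm (z - x))\<^sup>2 *\<^sub>R T (z - x)) *v v)" by (simp add: r_def)
    qed
  qed
  show ?thesis unfolding jet2_def
    using sym Tc Tsym T0 ineq d by blast
qed

lemma dist_prod_le: "dist (a,b) (c,d) \<le> dist a c + dist b d"
  by (simp add: dist_Pair_Pair sqrt_sum_squares_le_sum)

lemma dist4_le: "dist (y,\<theta>,Q,Y) (x,\<eta>,P,X) \<le> norm (x - y) + norm (\<eta> - \<theta>) + norm (P - Q) + norm (X - Y)"
proof -
  have "dist (y,\<theta>,Q,Y) (x,\<eta>,P,X) \<le> dist y x + dist (\<theta>,Q,Y) (\<eta>,P,X)" by (rule dist_prod_le)
  also have "\<dots> \<le> dist y x + (dist \<theta> \<eta> + dist (Q,Y) (P,X))" using dist_prod_le by (intro add_left_mono) auto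
  also have "\<dots> \<le> dist y x + (dist \<theta> \<eta> + (dist Q P + dist Y X))" using dist_prod_le by (intro add_left_mono) auto
  finally show ?thesis by (simp add: dist_norm norm_minus_commute add_ac)
qed

lemma env_upper:
  fixes F :: "real^'n \<Rightarrow> real^'N \<Rightarrow> real^'n^'N \<Rightarrow> real^'n^'n^'N \<Rightarrow> real^'N"
  assumes Fc: "F_continuous F \<Omega>" and x: "x \<in> \<Omega>" and sX: "sym_arr X"
    and env: "xi_env F \<Omega> \<xi> x \<eta> P X \<ge> 0"
  shows "\<xi> \<bullet> F x \<eta> P X \<ge> 0"
proof -
  let ?G = "\<lambda>q. case q of (y,\<theta>,Q,Y) \<Rightarrow> F y \<theta> Q Y"
  have pin: "(x,\<eta>,P,X) \<in> dom_F \<Omega>" by (simp add: dom_F_def x sX)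
  have bnd: "\<xi> \<bullet> F x \<eta> P X \<ge> -\<delta>" if \<delta>: "\<delta> > 0" for \<delta>
  proof -
    have "\<delta> / (norm \<xi> + 1) > 0" 
    proof -
      have "norm \<xi> + 1 > 0" by (metis norm_ge_zero add_nonneg_pos zero_less_one)
      then show ?thesis using \<delta> by simp
    qed
    then obtain \<rho> where \<rho>: "\<rho> > 0" and
      \<rho>': "\<And>q. q \<in> dom_F \<Omega> \<Longrightarrow> dist q (x,\<eta>,P,X) < \<rho> \<Longrightarrow> dist (?G q) (?G (x,\<eta>,P,X)) < \<delta> / (norm \<xi> + 1)"
      using Fc pin unfolding F_continuous_def continuous_on_iff by metis
    have ev: "eventually (\<lambda>\<epsilon>. (SUP q \<in> {(y, \<theta>, Q, Y). y \<in> \<Omega> \<and> sym_arr Y \<and>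
                 norm (x - y) + norm (\<eta> - \<theta>) + norm (P - Q) + norm (X - Y) \<le> \<epsilon>}.
         ereal (\<xi> \<bullet> (case q of (y, \<theta>, Q, Y) \<Rightarrow> F y \<theta> Q Y))) \<le> ereal (\<xi> \<bullet> F x \<eta> P X + \<delta>)) (at_right 0)"
      unfolding eventually_at_right_field
    proof (intro exI[of _ \<rho>] conjI allI impI)
      show "(0::real) < \<rho>" by (rule \<rho>)
      fix \<epsilon> :: real assume \<epsilon>: "0 < \<epsilon>" "\<epsilon> < \<rho>"
      show "(SUP q \<in> {(y, \<theta>, Q, Y). y \<in> \<Omega> \<and> sym_arr Y \<and>
                 norm (x - y) + norm (\<eta> - \<theta>) + norm (P - Q) + norm (X - Y) \<le> \<epsilon>}.
         ereal (\<xi> \<bullet> (case q of (y, \<theta>, Q, Y) \<Rightarrow> F y \<theta> Q Y))) \<le> ereal (\<xi> \<bullet> F x \<eta> P X + \<delta>)"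
      proof (rule SUP_least)
        fix q assume q: "q \<in> {(y, \<theta>, Q, Y). y \<in> \<Omega> \<and> sym_arr Y \<and>
                 norm (x - y) + norm (\<eta> - \<theta>) + norm (P - Q) + norm (X - Y) \<le> \<epsilon>}"
        obtain y \<theta> Q Y where qe: "q = (y,\<theta>,Q,Y)" by (cases q) auto
        have yq: "y \<in> \<Omega>" "sym_arr Y" "norm (x - y) + norm (\<eta> - \<theta>) + norm (P - Q) + norm (X - Y) \<le> \<epsilon>"
          using q qe by auto
        have qd: "q \<in> dom_F \<Omega>" using yq qe by (simp add: dom_F_def)
        have "dist q (x,\<eta>,P,X) < \<rho>" using dist4_le[of y \<theta> Q Y x \<eta> P X] yq \<epsilon> qe by simp
        then have dG: "norm (F y \<theta> Q Y - F x \<eta> P X) < \<delta> / (norm \<xi> + 1)"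
          using \<rho>'[OF qd] qe by (simp add: dist_norm)
        have "\<xi> \<bullet> F y \<theta> Q Y = \<xi> \<bullet> F x \<eta> P X + \<xi> \<bullet> (F y \<theta> Q Y - F x \<eta> P X)"
          by (simp add: inner_diff_right)
        also have "\<dots> \<le> \<xi> \<bullet> F x \<eta> P X + norm \<xi> * norm (F y \<theta> Q Y - F x \<eta> P X)"
          using Cauchy_Schwarz_ineq2[of \<xi> "F y \<theta> Q Y - F x \<eta> P X"] by simp
        also have "\<dots> \<le> \<xi> \<bullet> F x \<eta> P X + (norm \<xi> + 1) * (\<delta> / (norm \<xi> + 1))"
          using dG by (intro add_left_mono mult_mono) auto
        also have "\<dots> = \<xi> \<bullet> F x \<eta> P X + \<delta>"
        proof -
          have "norm \<xi> + 1 \<noteq> 0" by (metis norm_ge_zero add_nonneg_pos zero_less_one less_irrefl)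
          then show ?thesis by simp
        qed
        finally show "ereal (\<xi> \<bullet> (case q of (y, \<theta>, Q, Y) \<Rightarrow> F y \<theta> Q Y)) \<le> ereal (\<xi> \<bullet> F x \<eta> P X + \<delta>)"
          using qe by simp
      qed
    qed
    have "xi_env F \<Omega> \<xi> x \<eta> P X \<le> ereal (\<xi> \<bullet> F x \<eta> P X + \<delta>)"
      unfolding xi_env_def by (rule Limsup_bounded[OF ev])
    then have "0 \<le> ereal (\<xi> \<bullet> F x \<eta> P X + \<delta>)" using env by (rule order.trans[rotated])
    then show ?thesis by simp
  qed
  show ?thesis
  proof (rule ccontr)
    assume "\<not> ?thesis"
    then have "- (\<xi> \<bullet> F x \<eta> P X) / 2 > 0" by simp
    from bnd[OF this] \<open>\<not> ?thesis\<close> show False by simp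
  qed
qed

lemma partA:
  fixes F :: "real^'n \<Rightarrow> real^'N \<Rightarrow> real^'n^'N \<Rightarrow> real^'n^'n^'N \<Rightarrow> real^'N"
  assumes \<Omega>: "open \<Omega>" and uc: "continuous_on \<Omega> u" and cs: "contact_solution F \<Omega> u"
    and Fc: "F_continuous F \<Omega>" and x: "x \<in> \<Omega>" and td: "twice_diff_at u x P X"
  shows "F x (u x) P X = 0"
proof (rule ccontr)
  assume ne: "F x (u x) P X \<noteq> 0"
  define \<xi> where "\<xi> = - (1 / norm (F x (u x) P X)) *\<^sub>R F x (u x) P X"
  have n\<xi>: "norm \<xi> = 1" using ne by (simp add: \<xi>_def)
  have "jet2 u \<Omega> \<xi> x P X" by (rule jet_twice[OF \<Omega> uc x td n\<xi>])
  then have "cjet2 u \<Omega> \<xi> x P X" unfolding cjet2_def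
    by (intro exI[of _ "\<lambda>m. \<xi>"] exI[of _ "\<lambda>m. x"] exI[of _ "\<lambda>m. P"] exI[of _ "\<lambda>m. X"])
      (simp add: n\<xi> x)
  then have "xi_env F \<Omega> \<xi> x (u x) P X \<ge> 0" using cs x n\<xi> unfolding contact_solution_def by blast
  then have "\<xi> \<bullet> F x (u x) P X \<ge> 0" by (rule env_upper[OF Fc x sym2[OF td]])
  moreover have "\<xi> \<bullet> F x (u x) P X = - norm (F x (u x) P X)"
    using ne by (simp add: \<xi>_def power2_norm_eq_inner[symmetric] power2_eq_square)
  ultimately show False using ne by simp
qed

lemma vee_zero:
  fixes \<xi> a :: "real^'N"
  assumes h: "\<And>v. (\<xi> \<bullet> v) * (a \<bullet> v) = 0" and \<xi>: "\<xi> \<noteq> 0"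
  shows "a = 0"
proof -
  have "(\<xi> \<bullet> \<xi>) * (a \<bullet> \<xi>) = 0" by (rule h)
  then have a\<xi>: "a \<bullet> \<xi> = 0" using \<xi> by simp
  have "(\<xi> \<bullet> (\<xi> + a)) * (a \<bullet> (\<xi> + a)) = 0" by (rule h)
  then have "(\<xi> \<bullet> \<xi>) * (a \<bullet> a) = 0" using a\<xi> by (simp add: inner_add_right inner_commute)
  then show ?thesis using \<xi> by simp
qed

lemma cone_lemma:
  fixes \<xi> w :: "real^'N"
  assumes h: "\<And>v. (\<xi> \<bullet> v) * (w \<bullet> v) \<ge> 0" and \<xi>: "\<xi> \<noteq> 0"
  shows "w = ((\<xi> \<bullet> w) / (\<xi> \<bullet> \<xi>)) *\<^sub>R \<xi>"
proof -
  define c where "c = (\<xi> \<bullet> w) / (\<xi> \<bullet> \<xi>)"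
  define p where "p = w - c *\<^sub>R \<xi>"
  have \<xi>\<xi>: "\<xi> \<bullet> \<xi> > 0" using \<xi> by simp
  have p\<xi>: "\<xi> \<bullet> p = 0" using \<xi>\<xi> by (simp add: p_def c_def inner_diff_right)
  have wp: "w \<bullet> p = p \<bullet> p"
  proof -
    have "w = p + c *\<^sub>R \<xi>" by (simp add: p_def)
    then have "w \<bullet> p = p \<bullet> p + c * (\<xi> \<bullet> p)" by (metis inner_add_left inner_scaleR_left)
    then show ?thesis using p\<xi> by simp
  qed
  have "p \<bullet> p = 0"
  proof (rule ccontr)
    assume "p \<bullet> p \<noteq> 0"
    then have pp: "p \<bullet> p > 0" by (simp add: order_le_neq_trans)
    define s where "s = (\<bar>\<xi> \<bullet> w\<bar> + 1) / (p \<bullet> p)"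
    have "(\<xi> \<bullet> (\<xi> - s *\<^sub>R p)) * (w \<bullet> (\<xi> - s *\<^sub>R p)) \<ge> 0" by (rule h)
    then have "(\<xi> \<bullet> \<xi>) * (\<xi> \<bullet> w - s * (p \<bullet> p)) \<ge> 0"
      using p\<xi> wp by (simp add: inner_diff_right inner_commute)
    then have "\<xi> \<bullet> w - s * (p \<bullet> p) \<ge> 0" using \<xi>\<xi> by (simp add: zero_le_mult_iff)
    moreover have "s * (p \<bullet> p) = \<bar>\<xi> \<bullet> w\<bar> + 1" using pp by (simp add: s_def)
    ultimately show False by linarith
  qed
  then have "p = 0" by simp
  then show ?thesis by (simp add: p_def c_def)
qed

lemma scale_lemma:
  fixes c d :: real
  assumes h: "\<And>\<epsilon>. \<epsilon> > 0 \<Longrightarrow> \<exists>\<delta>>0. \<forall>t. t \<noteq> 0 \<and> \<bar>t\<bar> < \<delta> \<longrightarrow> t * c + t^2 * d \<le> \<epsilon> * t^2"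
  shows "c = 0" "d \<le> 0"
proof -
  obtain \<delta> where \<delta>: "\<delta> > 0" "\<And>t. t \<noteq> 0 \<Longrightarrow> \<bar>t\<bar> < \<delta> \<Longrightarrow> t * c + t^2 * d \<le> 1 * t^2"
    using h[of 1] by auto
  define K where "K = 1 + \<bar>d\<bar>"
  have K: "K > 0" by (simp add: K_def add_pos_nonneg)
  have pos: "c \<le> t * K" if t: "0 < t" "t < \<delta>" for t
  proof -
    have "t * c + t^2 * d \<le> t^2" using \<delta>(2)[of t] t by simp
    then have "t * (c + t * d - t) \<le> 0" by (simp add: power2_eq_square algebra_simps)
    then have h1: "c + t * d - t \<le> 0" using t by (simp add: mult_le_0_iff)
    have td: "t * (-d) \<le> t * \<bar>d\<bar>" by (rule mult_left_mono[OF abs_ge_minus_self]) (use t in simp)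
    moreover have "- (t * d) \<le> t * \<bar>d\<bar>" using td by simp
    ultimately show ?thesis using h1 by (simp add: K_def algebra_simps)
  qed
  have neg: "c \<ge> - (t * K)" if t: "0 < t" "t < \<delta>" for t
  proof -
    have "(-t) * c + (-t)^2 * d \<le> (-t)^2" using \<delta>(2)[of "-t"] t by simp
    then have "t * (- c + t * d - t) \<le> 0" by (simp add: power2_eq_square algebra_simps)
    then have h1: "- c + t * d - t \<le> 0" using t by (simp add: mult_le_0_iff)
    have td: "t * (-d) \<le> t * \<bar>d\<bar>" by (rule mult_left_mono[OF abs_ge_minus_self]) (use t in simp)
    moreover have "t * d \<ge> - (t * \<bar>d\<bar>)" using td by simp
    moreover have "- (t * K) = - t - t * \<bar>d\<bar>" by (simp add: K_def algebra_simps)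
    ultimately show ?thesis using h1 by linarith
  qed
  show c0: "c = 0"
  proof (rule ccontr)
    assume "c \<noteq> 0"
    then have ac: "\<bar>c\<bar> > 0" by simp
    define t where "t = min (\<delta>/2) (\<bar>c\<bar> / (2 * K))"
    have t: "0 < t" "t < \<delta>" using \<delta> ac K by (auto simp: t_def)
    have "t \<le> \<bar>c\<bar> / (2 * K)" by (simp add: t_def)
    then have "t * K \<le> \<bar>c\<bar> / (2 * K) * K" by (rule mult_right_mono) (use K in simp)
    also have "\<dots> = \<bar>c\<bar> / 2" using K by simp
    finally have "t * K \<le> \<bar>c\<bar> / 2" .
    then show False using pos[OF t] neg[OF t] ac by linarith
  qed
  show "d \<le> 0"
  proof (rule ccontr)
    assume "\<not> d \<le> 0"
    then have d: "d > 0" by simp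
    obtain \<delta>' where \<delta>': "\<delta>' > 0" "\<And>t. t \<noteq> 0 \<Longrightarrow> \<bar>t\<bar> < \<delta>' \<Longrightarrow> t * c + t^2 * d \<le> (d/2) * t^2"
      using h[of "d/2"] d by auto
    have "(\<delta>'/2) * c + (\<delta>'/2)^2 * d \<le> (d/2) * (\<delta>'/2)^2" using \<delta>'(2)[of "\<delta>'/2"] \<delta>'(1) by simp
    then have "(\<delta>'/2)^2 * d \<le> (d/2) * (\<delta>'/2)^2" using c0 by simp
    moreover have "(\<delta>'/2)^2 > 0" using \<delta>'(1) by simp
    ultimately show False using d by (simp add: mult.commute)
  qed
qed

lemma psd_form:
  fixes g :: "real^'N" and D :: "real^'n^'n^'N"
  shows "v \<bullet> ((\<chi> i j. \<Sum>a\<in>UNIV. g$a * D$a$i$j) *v v) = g \<bullet> contr D v"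
proof -
  have "v \<bullet> ((\<chi> i j. \<Sum>a\<in>UNIV. g$a * D$a$i$j) *v v) = (\<Sum>i\<in>UNIV. \<Sum>j\<in>UNIV. \<Sum>a\<in>UNIV. g$a * D$a$i$j * v$i * v$j)"
    by (simp add: inner_vec_def matrix_vector_mult_def sum_distrib_left sum_distrib_right mult_ac)
  also have "\<dots> = (\<Sum>i\<in>UNIV. \<Sum>a\<in>UNIV. \<Sum>j\<in>UNIV. g$a * D$a$i$j * v$i * v$j)"
    by (rule sum.cong[OF refl], rule sum.swap)
  also have "\<dots> = (\<Sum>a\<in>UNIV. \<Sum>i\<in>UNIV. \<Sum>j\<in>UNIV. g$a * D$a$i$j * v$i * v$j)"
    by (rule sum.swap)
  also have "\<dots> = g \<bullet> contr D v"
    by (simp add: inner_vec_def contr_def sum_distrib_left mult_ac)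
  finally show ?thesis .
qed

lemma contr_diff: "contr (A - B) h = contr A h - contr B h"
  by (simp add: contr_def vec_eq_iff sum_subtractf algebra_simps)

lemma contr_scale: "contr A (t *\<^sub>R h) = t^2 *\<^sub>R contr A h"
  by (simp add: contr_def vec_eq_iff sum_distrib_left power2_eq_square mult_ac)

lemma contr_zero: "contr A 0 = 0"
  by (simp add: contr_def vec_eq_iff)

definition bil :: "real^'n^'n^'N \<Rightarrow> real^'n \<Rightarrow> real^'n \<Rightarrow> real^'N" where
  "bil D x y = (\<chi> a. \<Sum>k\<in>UNIV. \<Sum>l\<in>UNIV. D$a$k$l * x$k * y$l)"

lemma contr_bil: "contr D h = bil D h h"
  by (simp add: contr_def bil_def)

lemma bil_addl: "bil D (x + y) z = bil D x z + bil D y z"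
  by (simp add: bil_def vec_eq_iff sum.distrib algebra_simps)

lemma bil_addr: "bil D z (x + y) = bil D z x + bil D z y"
  by (simp add: bil_def vec_eq_iff sum.distrib algebra_simps)

lemma mult_if_1: "x * (if P then 1 else 0) = (if P then x else (0::real))"
  by simp

lemma bil_axis: "bil D (axis i 1) (axis j 1) = (\<chi> a. D$a$i$j)"
  by (simp add: bil_def vec_eq_iff axis_def mult_if_1 sum.delta sum.delta' cong: if_cong)

lemma polarization:
  assumes s: "sym_arr D" and z: "\<And>h. contr D h = 0"
  shows "D = 0"
proof -
  have e1: "contr D (axis i 1) $ a = D$a$i$i" for a i
    by (simp add: contr_bil bil_axis)
  have e2: "contr D (axis i 1 + axis j 1) $ a = D$a$i$i + D$a$i$j + D$a$j$i + D$a$j$j" for a i j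
    by (simp add: contr_bil bil_addl bil_addr bil_axis)
  have "D$a$i$j = 0" for a i j
  proof -
    have "D$a$i$i = 0" "D$a$j$j = 0" using e1 z by (metis zero_index)+
    moreover have "D$a$i$i + D$a$i$j + D$a$j$i + D$a$j$j = 0" using e2[of i j a] z by simp
    moreover have "D$a$j$i = D$a$i$j" using s by (simp add: sym_arr_def)
    ultimately show ?thesis by simp
  qed
  then show ?thesis by (simp add: vec_eq_iff)
qed

lemma final_alg:
  fixes \<zeta> f :: "real^'N" and W :: "'h \<Rightarrow> real^'N"
  assumes \<zeta>: "norm \<zeta> = 1" and fw: "\<And>h. f \<bullet> W h \<ge> 0"
    and cw: "\<And>h v. (\<zeta> \<bullet> v) * (W h \<bullet> v) \<ge> 0"
    and zf: "(\<And>h. W h = 0) \<Longrightarrow> f = 0"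
  shows "\<zeta> \<bullet> f \<ge> 0"
proof (rule ccontr)
  assume neg: "\<not> \<zeta> \<bullet> f \<ge> 0"
  have \<zeta>0: "\<zeta> \<noteq> 0" using \<zeta> by auto
  have \<zeta>\<zeta>: "\<zeta> \<bullet> \<zeta> = 1" using \<zeta> by (simp add: power2_norm_eq_inner[symmetric])
  have "W h = 0" for h
  proof -
    have Wh: "W h = (\<zeta> \<bullet> W h) *\<^sub>R \<zeta>" using cone_lemma[OF cw \<zeta>0] \<zeta>\<zeta> by simp
    have "(\<zeta> \<bullet> \<zeta>) * (W h \<bullet> \<zeta>) \<ge> 0" by (rule cw)
    then have c0: "\<zeta> \<bullet> W h \<ge> 0" using \<zeta>\<zeta> by (simp add: inner_commute)
    have eq: "f \<bullet> W h = (\<zeta> \<bullet> W h) * (\<zeta> \<bullet> f)" by (subst Wh) (simp add: inner_commute)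
    have "(\<zeta> \<bullet> W h) * (\<zeta> \<bullet> f) \<ge> 0" using fw[of h] unfolding eq .
    then have "\<zeta> \<bullet> W h \<le> 0" using neg by (simp add: zero_le_mult_iff)
    then have "\<zeta> \<bullet> W h = 0" using c0 by simp
    then show ?thesis using Wh by simp
  qed
  then have "f = 0" by (rule zf)
  then show False using neg by simp
qed

lemma sym_arr_diff: "sym_arr A \<Longrightarrow> sym_arr B \<Longrightarrow> sym_arr (A - B)"
  by (simp add: sym_arr_def)

lemma core:
  fixes F :: "real^'n \<Rightarrow> real^'N \<Rightarrow> real^'n^'N \<Rightarrow> real^'n^'n^'N \<Rightarrow> real^'N"
    and u :: "real^'n \<Rightarrow> real^'N"
  assumes \<Omega>: "open \<Omega>" and y: "y \<in> \<Omega>" and td: "twice_diff_at u y P0 Y"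
    and F0: "F y (u y) P0 Y = 0" and de: "degenerate_elliptic F \<Omega>"
    and jet: "jet2 u \<Omega> \<zeta> y Q Z" and \<zeta>: "norm \<zeta> = 1"
  shows "\<zeta> \<bullet> F y (u y) Q Z \<ge> 0"
proof -
  obtain T \<rho> where sZ: "sym_arr Z" and Tlim: "((\<lambda>h. norm (T h)) \<longlongrightarrow> 0) (at 0)" and \<rho>: "\<rho> > 0" and
    J: "\<And>z. z\<in>\<Omega> \<Longrightarrow> z \<noteq> y \<Longrightarrow> dist z y < \<rho> \<Longrightarrow>
       mat_le (vee \<zeta> (u z - u y - Q *v (z - y) - (1/2) *\<^sub>R contr Z (z - y))) ((norm (z - y))\<^sup>2 *\<^sub>R T (z - y))"
    using jet unfolding jet2_def by metis
  have sY: "sym_arr Y" by (rule sym2[OF td])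
  obtain d3 where d3: "d3 > 0" "ball y d3 \<subseteq> \<Omega>" using \<Omega> y open_contains_ball by blast
  define A where "A = P0 - Q"
  define B where "B = Y - Z"
  define CN where "CN = real CARD('N)"
  have CN: "CN > 0" by (simp add: CN_def)
  have key: "\<exists>\<delta>>0. \<forall>t. t \<noteq> 0 \<and> \<bar>t\<bar> < \<delta> \<longrightarrow>
      t * ((\<zeta> \<bullet> v) * ((A *v h0) \<bullet> v)) + t^2 * ((1/2) * ((\<zeta> \<bullet> v) * (contr B h0 \<bullet> v))) \<le> \<epsilon> * t^2"
    if \<epsilon>: "\<epsilon> > 0" for v h0 \<epsilon>
  proof (cases "h0 = 0")
    case True
    then show ?thesis using \<epsilon> by (intro exI[of _ 1]) (simp add: contr_zero)
  next
    case False
    then have nh0: "norm h0 > 0" by simp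
    define K where "K = (CN + 1) * ((norm v)^2 + 1) * ((norm h0)^2 + 1)"
    have Ka: "(norm v)^2 + 1 > 0" by (metis add_nonneg_pos zero_le_power2 zero_less_one)
    have Kb: "(norm h0)^2 + 1 > 0" by (metis add_nonneg_pos zero_le_power2 zero_less_one)
    have Kc: "CN + 1 > 0" using CN by simp
    have K: "K > 0" unfolding K_def using Ka Kb Kc by simp
    define e1 where "e1 = \<epsilon> / K"
    have e1: "e1 > 0" using K \<epsilon> by (simp add: e1_def)
    have "eventually (\<lambda>h. dist (norm (T h)) 0 < e1) (at 0)" using tendstoD[OF Tlim e1] .
    then obtain \<delta>1 where \<delta>1: "\<delta>1 > 0" "\<And>h. h \<noteq> 0 \<Longrightarrow> dist h 0 < \<delta>1 \<Longrightarrow> norm (T h) < e1"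
      unfolding eventually_at by auto
    obtain \<delta>2 where \<delta>2: "\<delta>2 > 0" "\<And>h. norm h < \<delta>2 \<Longrightarrow>
        norm (u (y+h) - u y - P0 *v h - (1/2) *\<^sub>R contr Y h) \<le> e1 * (norm h)^2"
      using taylor2[OF td e1] by auto
    define \<delta> where "\<delta> = min (min \<delta>1 \<delta>2) (min \<rho> d3) / norm h0"
    show ?thesis
    proof (intro exI[of _ \<delta>] conjI allI impI)
      show "\<delta> > 0" using \<delta>1 \<delta>2 \<rho> d3 nh0 by (simp add: \<delta>_def)
      fix t :: real assume t: "t \<noteq> 0 \<and> \<bar>t\<bar> < \<delta>"
      define h where "h = t *\<^sub>R h0"
      have nh: "norm h = \<bar>t\<bar> * norm h0" by (simp add: h_def)
      have "\<bar>t\<bar> * norm h0 < min (min \<delta>1 \<delta>2) (min \<rho> d3)"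
        using t nh0 by (simp add: \<delta>_def pos_less_divide_eq)
      then have hs: "norm h < \<delta>1" "norm h < \<delta>2" "norm h < \<rho>" "norm h < d3" unfolding nh by auto
      have h0': "h \<noteq> 0" using t False by (simp add: h_def)
      define z where "z = y + h"
      have zy: "z - y = h" by (simp add: z_def)
      have zin: "z \<in> \<Omega>"
      proof -
        have "dist y z < d3" using hs by (simp add: z_def dist_norm)
        then show ?thesis using d3(2) by auto
      qed
      have zne: "z \<noteq> y" using h0' by (simp add: z_def)
      have zd: "dist z y < \<rho>" using hs by (simp add: z_def dist_norm)
      define jv where "jv = u z - u y - Q *v h - (1/2) *\<^sub>R contr Z h"
      define r0 where "r0 = u (y+h) - u y - P0 *v h - (1/2) *\<^sub>R contr Y h"
      have nr0: "norm r0 \<le> e1 * (norm h)^2" unfolding r0_def by (rule \<delta>2(2)[OF hs(2)])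
      have nT: "norm (T h) \<le> e1" using \<delta>1(2)[OF h0'] hs by simp
      have J1: "(\<zeta> \<bullet> v) * (jv \<bullet> v) \<le> (norm h)^2 * (v \<bullet> (T h *v v))"
      proof -
        have "v \<bullet> (vee \<zeta> jv *v v) \<le> v \<bullet> (((norm h)\<^sup>2 *\<^sub>R T h) *v v)"
          using J[OF zin zne zd] unfolding mat_le_def zy jv_def by blast
        then show ?thesis by (simp add: vee_quad scaleR_matrix_vector_assoc[symmetric])
      qed
      have J2: "(norm h)^2 * (v \<bullet> (T h *v v)) \<le> (norm h)^2 * (CN * e1 * (norm v)^2)"
      proof (rule mult_left_mono)
        have "v \<bullet> (T h *v v) \<le> CN * norm (T h) * (norm v)^2" unfolding CN_def by (rule quad_le)
        also have "\<dots> \<le> CN * e1 * (norm v)^2" using nT CN by (intro mult_right_mono mult_left_mono) auto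
        finally show "v \<bullet> (T h *v v) \<le> CN * e1 * (norm v)^2" .
      qed simp
      have R1: "- ((\<zeta> \<bullet> v) * (r0 \<bullet> v)) \<le> e1 * (norm h)^2 * (norm v)^2"
      proof -
        have "- ((\<zeta> \<bullet> v) * (r0 \<bullet> v)) \<le> \<bar>\<zeta> \<bullet> v\<bar> * \<bar>r0 \<bullet> v\<bar>" by (simp add: abs_mult[symmetric])
        also have "\<dots> \<le> (norm \<zeta> * norm v) * (norm r0 * norm v)"
          by (intro mult_mono Cauchy_Schwarz_ineq2) auto
        also have "\<dots> \<le> norm v * (e1 * (norm h)^2 * norm v)"
          using \<zeta> nr0 by (simp add: mult_left_mono mult_right_mono)
        finally show ?thesis by (simp add: power2_eq_square mult_ac)
      qed
      have dec: "jv - r0 = t *\<^sub>R (A *v h0) + (t^2 / 2) *\<^sub>R contr B h0"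
      proof -
        have "jv - r0 = A *v h + (1/2) *\<^sub>R contr B h"
          by (simp add: jv_def r0_def z_def A_def B_def matrix_vector_mult_diff_rdistrib contr_diff
              algebra_simps)
        also have "\<dots> = t *\<^sub>R (A *v h0) + (t^2 / 2) *\<^sub>R contr B h0"
          by (simp add: h_def matrix_vector_mult_scaleR contr_scale)
        finally show ?thesis .
      qed
      have "t * ((\<zeta> \<bullet> v) * ((A *v h0) \<bullet> v)) + t^2 * ((1/2) * ((\<zeta> \<bullet> v) * (contr B h0 \<bullet> v)))
          = (\<zeta> \<bullet> v) * ((jv - r0) \<bullet> v)"
        unfolding dec by (simp add: inner_add_left algebra_simps)
      also have "\<dots> = (\<zeta> \<bullet> v) * (jv \<bullet> v) - (\<zeta> \<bullet> v) * (r0 \<bullet> v)"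
        by (simp add: inner_diff_left algebra_simps)
      also have "\<dots> \<le> (norm h)^2 * (CN * e1 * (norm v)^2) + e1 * (norm h)^2 * (norm v)^2"
        using J1 J2 R1 by linarith
      also have "\<dots> = e1 * t^2 * ((CN + 1) * ((norm v)^2 * (norm h0)^2))"
        by (simp add: nh power_mult_distrib algebra_simps)
      also have "\<dots> \<le> e1 * t^2 * K"
      proof (rule mult_left_mono)
        have "(norm v)^2 * (norm h0)^2 \<le> ((norm v)^2 + 1) * ((norm h0)^2 + 1)"
          by (intro mult_mono) auto
        then show "(CN + 1) * ((norm v)^2 * (norm h0)^2) \<le> K"
          unfolding K_def using CN by (simp add: mult.assoc)
      qed (use e1 in simp)
      also have "\<dots> = \<epsilon> * t^2" using K by (simp add: e1_def)
      finally show "t * ((\<zeta> \<bullet> v) * ((A *v h0) \<bullet> v)) + t^2 * ((1/2) * ((\<zeta> \<bullet> v) * (contr B h0 \<bullet> v)))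
          \<le> \<epsilon> * t^2" .
    qed
  qed
  have c0: "(\<zeta> \<bullet> v) * ((A *v h0) \<bullet> v) = 0" for v h0
    using scale_lemma(1)[OF key] by blast
  have d0: "(1/2) * ((\<zeta> \<bullet> v) * (contr B h0 \<bullet> v)) \<le> 0" for v h0
    using scale_lemma(2)[OF key] by blast
  have \<zeta>0: "\<zeta> \<noteq> 0" using \<zeta> by auto
  have "A *v h0 = 0 *v h0" for h0
    using vee_zero[OF c0 \<zeta>0] by simp
  then have "A = 0" using matrix_eq by blast
  then have QP: "Q = P0" by (simp add: A_def)
  define g where "g = F y (u y) P0 Z"
  have cw: "(\<zeta> \<bullet> v) * (contr (Z - Y) h \<bullet> v) \<ge> 0" for h v
  proof -
    have "contr (Z - Y) h = - contr B h" by (simp add: B_def contr_diff)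
    then show ?thesis using d0[of v h] by (simp add: inner_minus_left)
  qed
  have "psd (\<chi> i j. \<Sum>a\<in>UNIV. (F y (u y) P0 Z $ a - F y (u y) P0 Y $ a) * (Z - Y)$a$i$j)"
    using de y sZ sY unfolding degenerate_elliptic_def by blast
  then have psdg: "psd (\<chi> i j. \<Sum>a\<in>UNIV. g $ a * (Z - Y)$a$i$j)" by (simp add: F0 g_def)
  have fw: "g \<bullet> contr (Z - Y) h \<ge> 0" for h
  proof -
    have "0 \<le> h \<bullet> ((\<chi> i j. \<Sum>a\<in>UNIV. g $ a * (Z - Y)$a$i$j) *v h)"
      using psdg unfolding psd_def by blast
    then show ?thesis by (simp only: psd_form)
  qed
  have zf: "g = 0" if "\<And>h. contr (Z - Y) h = 0"
  proof -
    have "Z - Y = 0" by (rule polarization[OF sym_arr_diff[OF sZ sY] that])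
    then show ?thesis using F0 by (simp add: g_def)
  qed
  have "\<zeta> \<bullet> g \<ge> 0" by (rule final_alg[OF \<zeta> fw cw zf])
  then show ?thesis by (simp add: g_def QP)
qed

lemma ereal_ge0:
  fixes S :: ereal
  assumes h: "\<And>\<delta>. \<delta> > 0 \<Longrightarrow> ereal (-\<delta>) \<le> S"
  shows "0 \<le> S"
proof (cases S)
  case (real r)
  have hr: "-\<delta> \<le> r" if "\<delta> > 0" for \<delta> using h[OF that] real by simp
  have "r \<ge> 0"
  proof (rule ccontr)
    assume nr: "\<not> r \<ge> 0"
    then have "-r/2 > 0" by simp
    from hr[OF this] have "r/2 \<le> r" by simp
    with nr show False by simp
  qed
  then show ?thesis using real by simp
next
  case PInf
  then show ?thesis by simp
next
  case MInf
  then show ?thesis using h[of 1] by simp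
qed

lemma partB:
  fixes F :: "real^'n \<Rightarrow> real^'N \<Rightarrow> real^'n^'N \<Rightarrow> real^'n^'n^'N \<Rightarrow> real^'N"
    and u :: "real^'n \<Rightarrow> real^'N"
  assumes \<Omega>: "open \<Omega>" and lb: "locally_bounded F \<Omega>" and uc: "continuous_on \<Omega> u"
    and H: "\<forall>x\<in>\<Omega>. \<exists>P X. twice_diff_at u x P X \<and> F x (u x) P X = 0"
    and de: "degenerate_elliptic F \<Omega>" and x: "x \<in> \<Omega>" and \<xi>: "norm \<xi> = 1"
    and cj: "cjet2 u \<Omega> \<xi> x P X"
  shows "xi_env F \<Omega> \<xi> x (u x) P X \<ge> 0"
proof -
  obtain \<xi>s xs Ps Xs where sq: "\<And>m. norm (\<xi>s m) = 1 \<and> xs m \<in> \<Omega> \<and> jet2 u \<Omega> (\<xi>s m) (xs m) (Ps m) (Xs m)"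
    and l\<xi>: "\<xi>s \<longlonglongrightarrow> \<xi>" and lx: "xs \<longlonglongrightarrow> x" and lP: "Ps \<longlonglongrightarrow> P" and lX: "Xs \<longlonglongrightarrow> X"
    using cj unfolding cjet2_def by blast
  define q where "q m = (xs m, u (xs m), Ps m, Xs m)" for m
  have pos: "\<xi>s m \<bullet> F (xs m) (u (xs m)) (Ps m) (Xs m) \<ge> 0" for m
  proof -
    from H sq[of m] obtain P0 Y where "twice_diff_at u (xs m) P0 Y" "F (xs m) (u (xs m)) P0 Y = 0" by blast
    then show ?thesis using core[OF \<Omega> _ _ _ de, of "xs m" u P0 Y "\<xi>s m" "Ps m" "Xs m"] sq[of m] by blast
  qed
  have sX: "sym_arr X"
    unfolding sym_arr_def
  proof (intro allI)
    fix a i j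
    have l1: "(\<lambda>m. Xs m $ a $ i $ j) \<longlonglongrightarrow> X $ a $ i $ j" by (intro tendsto_vec_nth lX)
    have "(\<lambda>m. Xs m $ a $ j $ i) \<longlonglongrightarrow> X $ a $ j $ i" by (intro tendsto_vec_nth lX)
    moreover have "Xs m $a$j$i = Xs m $a$i$j" for m using sq[of m] unfolding jet2_def sym_arr_def by metis
    ultimately have l2: "(\<lambda>m. Xs m $ a $ i $ j) \<longlonglongrightarrow> X $ a $ j $ i" by simp
    show "X$a$i$j = X$a$j$i" using LIMSEQ_unique[OF l1 l2] .
  qed
  have pin: "(x, u x, P, X) \<in> dom_F \<Omega>" by (simp add: dom_F_def x sX)
  obtain r M where r: "r > 0" and M: "\<And>q'. q' \<in> dom_F \<Omega> \<Longrightarrow> dist q' (x, u x, P, X) < r \<Longrightarrow>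
      norm (case q' of (y, \<theta>, Q, Y) \<Rightarrow> F y \<theta> Q Y) \<le> M"
    using lb pin unfolding locally_bounded_def by metis
  have ux: "(\<lambda>m. u (xs m)) \<longlonglongrightarrow> u x"
  proof -
    have "isCont u x" using uc \<Omega> x continuous_on_eq_continuous_at by blast
    then show ?thesis using lx isCont_tendsto_compose by blast
  qed
  have lq: "q \<longlonglongrightarrow> (x, u x, P, X)" unfolding q_def by (intro tendsto_Pair lx ux lP lX)
  have qdom: "q m \<in> dom_F \<Omega>" for m using sq[of m] unfolding q_def dom_F_def jet2_def by auto
  have lsum: "(\<lambda>m. norm (x - xs m) + norm (u x - u (xs m)) + norm (P - Ps m) + norm (X - Xs m)) \<longlonglongrightarrow> 0"
  proof -
    have "(\<lambda>m. norm (x - xs m) + norm (u x - u (xs m)) + norm (P - Ps m) + norm (X - Xs m))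
        \<longlonglongrightarrow> norm (x - x) + norm (u x - u x) + norm (P - P) + norm (X - X)"
      by (intro tendsto_intros lx ux lP lX)
    then show ?thesis by simp
  qed
  have sup: "0 \<le> (SUP q \<in> {(y, \<theta>, Q, Y). y \<in> \<Omega> \<and> sym_arr Y \<and>
                 norm (x - y) + norm (u x - \<theta>) + norm (P - Q) + norm (X - Y) \<le> \<epsilon>}.
         ereal (\<xi> \<bullet> (case q of (y, \<theta>, Q, Y) \<Rightarrow> F y \<theta> Q Y)))" if \<epsilon>: "\<epsilon> > 0" for \<epsilon>
  proof (rule ereal_ge0)
    fix \<delta> :: real assume \<delta>: "\<delta> > 0"
    have M1: "\<bar>M\<bar> + 1 > 0" by (metis abs_ge_zero add_nonneg_pos zero_less_one)
    define \<eta> where "\<eta> = \<delta> / (\<bar>M\<bar> + 1)"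
    have \<eta>: "\<eta> > 0" using \<delta> M1 by (simp add: \<eta>_def)
    have ev: "eventually (\<lambda>m. (norm (x - xs m) + norm (u x - u (xs m)) + norm (P - Ps m) + norm (X - Xs m)) < \<epsilon>
        \<and> dist (q m) (x, u x, P, X) < r \<and> dist (\<xi>s m) \<xi> < \<eta>) sequentially"
      by (intro eventually_conj order_tendstoD(2)[OF lsum \<epsilon>] tendstoD[OF lq r] tendstoD[OF l\<xi> \<eta>])
    then obtain m where m: "(norm (x - xs m) + norm (u x - u (xs m)) + norm (P - Ps m) + norm (X - Xs m)) < \<epsilon>"
        "dist (q m) (x, u x, P, X) < r" "dist (\<xi>s m) \<xi> < \<eta>"
      unfolding eventually_sequentially by blast
    define Fq where "Fq = F (xs m) (u (xs m)) (Ps m) (Xs m)"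
    have FM: "norm Fq \<le> M" using M[OF qdom m(2)] by (simp add: q_def Fq_def)
    have "\<xi> \<bullet> Fq = \<xi>s m \<bullet> Fq + (\<xi> - \<xi>s m) \<bullet> Fq" by (simp add: inner_diff_left)
    moreover have "\<xi>s m \<bullet> Fq \<ge> 0" using pos[of m] by (simp add: Fq_def)
    moreover have "(\<xi> - \<xi>s m) \<bullet> Fq \<ge> - \<delta>"
    proof -
      have "\<bar>(\<xi> - \<xi>s m) \<bullet> Fq\<bar> \<le> norm (\<xi> - \<xi>s m) * norm Fq" by (rule Cauchy_Schwarz_ineq2)
      also have "\<dots> \<le> \<eta> * (\<bar>M\<bar> + 1)"
      proof (rule mult_mono)
        show "norm (\<xi> - \<xi>s m) \<le> \<eta>" using m(3) by (simp add: dist_norm norm_minus_commute)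
        show "norm Fq \<le> \<bar>M\<bar> + 1" using FM by linarith
      qed (use \<eta> in auto)
      also have "\<dots> = \<delta>" using M1 by (simp add: \<eta>_def)
      finally show ?thesis by linarith
    qed
    ultimately have geq: "\<xi> \<bullet> Fq \<ge> - \<delta>" by linarith
    have qin: "q m \<in> {(y, \<theta>, Q, Y). y \<in> \<Omega> \<and> sym_arr Y \<and>
                 norm (x - y) + norm (u x - \<theta>) + norm (P - Q) + norm (X - Y) \<le> \<epsilon>}"
      using sq[of m] m(1) unfolding q_def jet2_def by auto
    have "ereal (- \<delta>) \<le> ereal (\<xi> \<bullet> (case q m of (y, \<theta>, Q, Y) \<Rightarrow> F y \<theta> Q Y))"
      using geq by (simp add: q_def Fq_def)
    also have "\<dots> \<le> (SUP q \<in> {(y, \<theta>, Q, Y). y \<in> \<Omega> \<and> sym_arr Y \<and>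
                 norm (x - y) + norm (u x - \<theta>) + norm (P - Q) + norm (X - Y) \<le> \<epsilon>}.
         ereal (\<xi> \<bullet> (case q of (y, \<theta>, Q, Y) \<Rightarrow> F y \<theta> Q Y)))"
      by (rule SUP_upper[OF qin])
    finally show "ereal (- \<delta>) \<le> (SUP q \<in> {(y, \<theta>, Q, Y). y \<in> \<Omega> \<and> sym_arr Y \<and>
                 norm (x - y) + norm (u x - \<theta>) + norm (P - Q) + norm (X - Y) \<le> \<epsilon>}.
         ereal (\<xi> \<bullet> (case q of (y, \<theta>, Q, Y) \<Rightarrow> F y \<theta> Q Y)))" .
  qed
  show ?thesis unfolding xi_env_def
  proof (rule le_Limsup[OF trivial_limit_at_right_real])
    show "\<forall>\<^sub>F \<epsilon> in at_right 0. 0 \<le> (SUP q \<in> {(y, \<theta>, Q, Y). y \<in> \<Omega> \<and> sym_arr Y \<and>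
                 norm (x - y) + norm (u x - \<theta>) + norm (P - Q) + norm (X - Y) \<le> \<epsilon>}.
         ereal (\<xi> \<bullet> (case q of (y, \<theta>, Q, Y) \<Rightarrow> F y \<theta> Q Y)))"
      unfolding eventually_at_right_field using sup by (intro exI[of _ 1]) auto
  qed
qed

theorem theorem22:
  fixes \<Omega> :: "(real^'n) set"
    and F :: "real^'n \<Rightarrow> real^'N \<Rightarrow> real^'n^'N \<Rightarrow> real^'n^'n^'N \<Rightarrow> real^'N"
    and u :: "real^'n \<Rightarrow> real^'N"
  assumes "open \<Omega>"
    and "locally_bounded F \<Omega>"
    and "continuous_on \<Omega> u"
  shows "(contact_solution F \<Omega> u \<and> F_continuous F \<Omega> \<longrightarrow>
            (\<forall>x\<in>\<Omega>. \<forall>P X. twice_diff_at u x P X \<longrightarrow> F x (u x) P X = 0))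
       \<and> ((\<forall>x\<in>\<Omega>. \<exists>P X. twice_diff_at u x P X \<and> F x (u x) P X = 0) \<and>
            degenerate_elliptic F \<Omega> \<longrightarrow> contact_solution F \<Omega> u)"
proof (intro conjI impI)
  assume a: "contact_solution F \<Omega> u \<and> F_continuous F \<Omega>"
  show "\<forall>x\<in>\<Omega>. \<forall>P X. twice_diff_at u x P X \<longrightarrow> F x (u x) P X = 0"
    using partA[OF assms(1) assms(3)] a by blast
next
  assume b: "(\<forall>x\<in>\<Omega>. \<exists>P X. twice_diff_at u x P X \<and> F x (u x) P X = 0) \<and> degenerate_elliptic F \<Omega>"
  show "contact_solution F \<Omega> u"
    unfolding contact_solution_def
    using assms(3) partB[OF assms(1) assms(2) assms(3)] b by blast
qed

end
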